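(* Let $X:\mathbb{N}\to\mathbf{Set}_*$ be a tower of pointed sets. Then the functors $G(X,-),H(X,-):\mathbf{Ab}\to\mathbf{Ab}$ are left exact. If moreover $X$ satisfies the Mittag-Leffler condition, then $G(X,-)$ and $H(X,-)$ are exact.
   Context: $\mathbb{N}$ is regarded as a category with a single morphism $n\to m$ whenever $n\ge m$; $\phi_{n,m}:X(n)\to X(m)$ are the structure maps. For a pointed set $Y$, $Y\wedge A:=\bigoplus_{Y\setminus\{*\}}A$ (finitely supported pointed maps $Y\to A$), functorial in $Y$ via $f_*(sv)=f(s)v$ and in $A$ coordinatewise, where $sv$ is the element with value $v$ at $s$ ($*v=0$). $G(X,A):=\lim_\mathbb{N}(X\wedge A)$; $K(X,A)$ is the image of the injective natural map $\rho:(\lim_\mathbb{N}X)\wedge A\to G(X,A)$, $\rho(xv)(n)=x(n)v$; $H(X,A):=G(X,A)/K(X,A)$. $X$ satisfies the Mittag-Leffler condition if for every $n$ there is $s\ge n$ such that $\mathrm{Im}(X(s)\to X(n))=\mathrm{Im}(X(r)\to X(n))$ for all $r\ge s$. *)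

theory Defs
  imports Main
begin

text \<open>Level n is the set X n (inside an
  ambient type 'x) with base point pt n; phi n m : X n -> X m is the structure map
  for n >= m.\<close>

definition tower :: "(nat \<Rightarrow> 'x set) \<Rightarrow> (nat \<Rightarrow> 'x) \<Rightarrow> (nat \<Rightarrow> nat \<Rightarrow> 'x \<Rightarrow> 'x) \<Rightarrow> bool" where
  "tower X pt phi \<longleftrightarrow>
     (\<forall>n. pt n \<in> X n) \<and>
     (\<forall>n m. m \<le> n \<longrightarrow> (\<forall>x\<in>X n. phi n m x \<in> X m) \<and> phi n m (pt n) = pt m) \<and>
     (\<forall>n. \<forall>x\<in>X n. phi n n x = x) \<and>
     (\<forall>n m k. k \<le> m \<longrightarrow> m \<le> n \<longrightarrow> (\<forall>x\<in>X n. phi m k (phi n m x) = phi n k x))"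

definition mittag_leffler :: "(nat \<Rightarrow> 'x set) \<Rightarrow> (nat \<Rightarrow> nat \<Rightarrow> 'x \<Rightarrow> 'x) \<Rightarrow> bool" where
  "mittag_leffler X phi \<longleftrightarrow>
     (\<forall>n. \<exists>s\<ge>n. \<forall>r\<ge>s. phi s n ` X s = phi r n ` X r)"

text \<open>Y smash A for a pointed set (Y, y0) and an abelian group A (the type 'a):
  finitely supported pointed maps Y -> A, i.e. functions vanishing outside Y - {y0}
  with finite support.\<close>

definition smash :: "'y set \<Rightarrow> 'y \<Rightarrow> ('y \<Rightarrow> 'a::ab_group_add) set" where
  "smash Y y0 = {v. finite {y. v y \<noteq> 0} \<and> (\<forall>y. v y \<noteq> 0 \<longrightarrow> y \<in> Y \<and> y \<noteq> y0)}"

text \<open>Functoriality in Y: f_*(s v) = f(s) v, extended additively; z0 is the base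
  point of the target (where everything becomes 0).\<close>

definition smash_map :: "('y \<Rightarrow> 'z) \<Rightarrow> 'z \<Rightarrow> ('y \<Rightarrow> 'a::ab_group_add) \<Rightarrow> ('z \<Rightarrow> 'a)" where
  "smash_map f z0 v = (\<lambda>t. if t = z0 then 0 else sum v {s. v s \<noteq> 0 \<and> f s = t})"

text \<open>G(X,A) = lim_N (X smash A), as compatible sequences.\<close>

definition Gset :: "(nat \<Rightarrow> 'x set) \<Rightarrow> (nat \<Rightarrow> 'x) \<Rightarrow> (nat \<Rightarrow> nat \<Rightarrow> 'x \<Rightarrow> 'x)
    \<Rightarrow> (nat \<Rightarrow> 'x \<Rightarrow> 'a::ab_group_add) set" where
  "Gset X pt phi = {g. (\<forall>n. g n \<in> smash (X n) (pt n)) \<and>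
       (\<forall>n m. m \<le> n \<longrightarrow> smash_map (phi n m) (pt m) (g n) = g m)}"

definition Gmap :: "('a \<Rightarrow> 'b) \<Rightarrow> (nat \<Rightarrow> 'x \<Rightarrow> 'a) \<Rightarrow> (nat \<Rightarrow> 'x \<Rightarrow> 'b)" where
  "Gmap h g = (\<lambda>n y. h (g n y))"

definition limX :: "(nat \<Rightarrow> 'x set) \<Rightarrow> (nat \<Rightarrow> nat \<Rightarrow> 'x \<Rightarrow> 'x) \<Rightarrow> (nat \<Rightarrow> 'x) set" where
  "limX X phi = {x. (\<forall>n. x n \<in> X n) \<and> (\<forall>n m. m \<le> n \<longrightarrow> phi n m (x n) = x m)}"

text \<open>rho : (lim X) smash A -> G(X,A), rho(x v)(n) = x(n) v (extended additively),
  i.e. the pushforward along the projection lim X -> X n.\<close>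

definition rho :: "(nat \<Rightarrow> 'x) \<Rightarrow> ((nat \<Rightarrow> 'x) \<Rightarrow> 'a::ab_group_add) \<Rightarrow> (nat \<Rightarrow> 'x \<Rightarrow> 'a)" where
  "rho pt v = (\<lambda>n. smash_map (\<lambda>x. x n) (pt n) v)"

definition Kset :: "(nat \<Rightarrow> 'x set) \<Rightarrow> (nat \<Rightarrow> 'x) \<Rightarrow> (nat \<Rightarrow> nat \<Rightarrow> 'x \<Rightarrow> 'x)
    \<Rightarrow> (nat \<Rightarrow> 'x \<Rightarrow> 'a::ab_group_add) set" where
  "Kset X pt phi = rho pt ` smash (limX X phi) pt"

text \<open>H(X,A) = G(X,A)/K(X,A), realised as the set of cosets g + K.\<close>

definition coset :: "(nat \<Rightarrow> 'x \<Rightarrow> 'a::ab_group_add) set \<Rightarrow> (nat \<Rightarrow> 'x \<Rightarrow> 'a) \<Rightarrow> (nat \<Rightarrow> 'x \<Rightarrow> 'a) set" where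
  "coset K g = {(\<lambda>n y. g n y + k n y) | k. k \<in> K}"

definition Hset :: "(nat \<Rightarrow> 'x set) \<Rightarrow> (nat \<Rightarrow> 'x) \<Rightarrow> (nat \<Rightarrow> nat \<Rightarrow> 'x \<Rightarrow> 'x)
    \<Rightarrow> (nat \<Rightarrow> 'x \<Rightarrow> 'a::ab_group_add) set set" where
  "Hset X pt phi = coset (Kset X pt phi) ` Gset X pt phi"

definition Hmap :: "(nat \<Rightarrow> 'x set) \<Rightarrow> (nat \<Rightarrow> 'x) \<Rightarrow> (nat \<Rightarrow> nat \<Rightarrow> 'x \<Rightarrow> 'x)
    \<Rightarrow> ('a::ab_group_add \<Rightarrow> 'b::ab_group_add) \<Rightarrow> (nat \<Rightarrow> 'x \<Rightarrow> 'a) set \<Rightarrow> (nat \<Rightarrow> 'x \<Rightarrow> 'b) set" where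
  "Hmap X pt phi h c = coset (Kset X pt phi) (Gmap h (SOME g. g \<in> c))"

definition additive :: "('a::ab_group_add \<Rightarrow> 'b::ab_group_add) \<Rightarrow> bool" where
  "additive h \<longleftrightarrow> (\<forall>x y. h (x + y) = h x + h y)"

text \<open>Exactness of C0 --f--> C1 --g--> C2 for maps between pointed carriers
  (zero of C2 is z2): im f = ker g.\<close>

definition exact_at :: "'p set \<Rightarrow> 'q set \<Rightarrow> 'r \<Rightarrow> ('p \<Rightarrow> 'q) \<Rightarrow> ('q \<Rightarrow> 'r) \<Rightarrow> bool" where
  "exact_at C0 C1 z2 f g \<longleftrightarrow> {b \<in> C1. g b = z2} = f ` C0"

end

theory Submission
  imports Defs
begin

lemma additive_0: "additive h \<Longrightarrow> h 0 = 0"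
  unfolding additive_def by (metis add.right_neutral add_left_cancel)

lemma additive_uminus: "additive h \<Longrightarrow> h (- x) = - h x"
  using additive_0[of h] unfolding additive_def
  by (metis add.right_inverse add_eq_0_iff)

lemma additive_diff: "additive h \<Longrightarrow> h (x - y) = h x - h y"
  using additive_uminus[of h] unfolding additive_def by (metis diff_conv_add_uminus)

lemma additive_sum: "additive h \<Longrightarrow> h (sum v F) = sum (\<lambda>x. h (v x)) F"
  using sum_comp_morphism[of h v F] additive_0[of h] unfolding additive_def by (simp add: o_def)

lemma smash_map_alt:
  assumes "finite F" "{s. v s \<noteq> 0} \<subseteq> F"
  shows "smash_map f z0 v t = (if t = z0 then 0 else sum v {s\<in>F. f s = t})"
proof -
  have "sum v {s. v s \<noteq> 0 \<and> f s = t} = sum v {s\<in>F. f s = t}"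
    by (rule sum.mono_neutral_left) (use assms in auto)
  then show ?thesis unfolding smash_map_def by simp
qed

lemma smash_finite: "v \<in> smash Y y0 \<Longrightarrow> finite {s. v s \<noteq> 0}"
  unfolding smash_def by auto

lemma smash_map_supp:
  assumes "finite {s. v s \<noteq> 0}"
  shows "{t. smash_map f z0 v t \<noteq> 0} \<subseteq> f ` {s. v s \<noteq> 0} - {z0}"
  using smash_map_alt[OF assms order_refl, of f z0]
  by auto (metis (mono_tags, lifting) empty_Collect_eq image_eqI mem_Collect_eq sum.empty)

lemma smash_map_in:
  assumes "finite {s. v s \<noteq> 0}" "\<And>s. v s \<noteq> 0 \<Longrightarrow> f s \<in> Z"
  shows "smash_map f z0 v \<in> smash Z z0"
proof -
  have "{t. smash_map f z0 v t \<noteq> 0} \<subseteq> f ` {s. v s \<noteq> 0} - {z0}" by (rule smash_map_supp[OF assms(1)])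
  moreover have "finite (f ` {s. v s \<noteq> 0} - {z0})" using assms(1) by simp
  ultimately show ?thesis unfolding smash_def using assms(2) by (auto intro: finite_subset)
qed

lemma smash_map_add:
  assumes "finite {s. v s \<noteq> 0}" "finite {s. w s \<noteq> 0}"
  shows "smash_map f z0 (\<lambda>s. v s + w s) t = smash_map f z0 v t + smash_map f z0 w t"
proof -
  let ?F = "{s. v s \<noteq> 0} \<union> {s. w s \<noteq> 0}"
  have F: "finite ?F" using assms by simp
  have "{s. v s + w s \<noteq> 0} \<subseteq> ?F" by auto
  note a = smash_map_alt[OF F this, of f z0 t] smash_map_alt[OF F, of v f z0 t] smash_map_alt[OF F, of w f z0 t]
  show ?thesis
    using a by (simp add: sum.distrib)
qed

lemma smash_map_comm:
  assumes "additive h" "finite {s. v s \<noteq> 0}"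
  shows "h (smash_map f z0 v t) = smash_map f z0 (\<lambda>s. h (v s)) t"
proof -
  have "{s. h (v s) \<noteq> 0} \<subseteq> {s. v s \<noteq> 0}" using additive_0[OF assms(1)] by auto
  note a = smash_map_alt[OF assms(2) this, of f z0 t] smash_map_alt[OF assms(2) order_refl, of f z0 t]
  show ?thesis unfolding a using additive_0[OF assms(1)] additive_sum[OF assms(1), of v] by simp
qed

lemma smash_map_comp:
  assumes "finite {s. v s \<noteq> 0}" "g z0 = z1" "\<And>s. v s \<noteq> 0 \<Longrightarrow> g (f s) = h s"
  shows "smash_map g z1 (smash_map f z0 v) = smash_map h z1 v"
proof
  fix u
  let ?F = "{s. v s \<noteq> 0}"
  let ?w = "smash_map f z0 v"
  have F': "finite (f ` ?F)" using assms(1) by simp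
  have sw: "{t. ?w t \<noteq> 0} \<subseteq> f ` ?F" using smash_map_supp[OF assms(1), of f z0] by auto
  show "smash_map g z1 ?w u = smash_map h z1 v u"
  proof (cases "u = z1")
    case True then show ?thesis unfolding smash_map_def by simp
  next
    case False
    have "smash_map g z1 ?w u = sum ?w {t\<in>f ` ?F. g t = u}"
      using smash_map_alt[OF F' sw, of g z1 u] False by simp
    also have "\<dots> = sum (\<lambda>t. sum v {s\<in>?F. f s = t}) {t\<in>f ` ?F. g t = u}"
    proof (rule sum.cong[OF refl])
      fix t assume "t \<in> {t\<in>f ` ?F. g t = u}"
      then have "t \<noteq> z0" using False assms(2) by auto
      then show "?w t = sum v {s\<in>?F. f s = t}" using smash_map_alt[OF assms(1) order_refl, of f z0 t] by simp
    qed
    also have "\<dots> = sum (\<lambda>t. sum v {s\<in>{s\<in>?F. h s = u}. f s = t}) {t\<in>f ` ?F. g t = u}"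
      by (rule sum.cong[OF refl]) (use assms(3) in \<open>auto intro!: sum.cong, metis+\<close>)
    also have "\<dots> = sum v {s\<in>?F. h s = u}"
      by (rule sum.group) (use assms in auto)
    also have "\<dots> = smash_map h z1 v u" using smash_map_alt[OF assms(1) order_refl, of h z1 u] False by simp
    finally show ?thesis .
  qed
qed

lemma smash_map_id:
  assumes "finite {s. v s \<noteq> 0}" "v z0 = 0" "\<And>s. v s \<noteq> 0 \<Longrightarrow> f s = s"
  shows "smash_map f z0 v = v"
proof
  fix t
  show "smash_map f z0 v t = v t"
  proof (cases "t = z0")
    case True then show ?thesis using assms(2) unfolding smash_map_def by simp
  next
    case False
    have "{s\<in>{s. v s \<noteq> 0}. f s = t} = (if v t \<noteq> 0 then {t} else {})" using assms(3) by auto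
    then show ?thesis using smash_map_alt[OF assms(1) order_refl, of f z0 t] False by (auto split: if_splits)
  qed
qed

definition subgrp :: "(nat \<Rightarrow> 'x \<Rightarrow> 'a::ab_group_add) set \<Rightarrow> bool" where
  "subgrp K \<longleftrightarrow> (\<lambda>n y. 0) \<in> K \<and> (\<forall>a\<in>K. \<forall>b\<in>K. (\<lambda>n y. a n y - b n y) \<in> K)"

lemma subgrp_diff: assumes "subgrp K" "a \<in> K" "b \<in> K" shows "(\<lambda>n y. a n y - b n y) \<in> K"
proof -
  have H: "\<forall>a\<in>K. \<forall>b\<in>K. (\<lambda>n y. a n y - b n y) \<in> K" using assms(1) by (simp add: subgrp_def)
  show ?thesis using bspec[OF bspec[OF H assms(2)] assms(3)] .
qed

lemma subgrp_0: "subgrp K \<Longrightarrow> (\<lambda>n y. 0) \<in> K"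
  by (simp add: subgrp_def)

lemma subgrp_neg: assumes "subgrp K" "b \<in> K" shows "(\<lambda>n y. - b n y) \<in> K"
  using subgrp_diff[OF assms(1) subgrp_0[OF assms(1)] assms(2)] by simp

lemma subgrp_add: assumes "subgrp K" "a \<in> K" "b \<in> K" shows "(\<lambda>n y. a n y + b n y) \<in> K"
  using subgrp_diff[OF assms(1) assms(2) subgrp_neg[OF assms(1) assms(3)]] by simp

lemma coset_alt: "coset K g = {(\<lambda>n y. g n y + k n y) | k. k \<in> K}"
  by (simp add: coset_def)

lemma coset_memI: "k \<in> K \<Longrightarrow> u = (\<lambda>n y. g n y + k n y) \<Longrightarrow> u \<in> coset K g"
  unfolding coset_def mem_Collect_eq by (intro exI[where x=k] conjI)

lemma coset_self: "subgrp K \<Longrightarrow> g \<in> coset K g"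
proof -
  assume "subgrp K"
  then have "(\<lambda>n y. 0) \<in> K" by (rule subgrp_0)
  then show ?thesis unfolding coset_def by (intro CollectI exI[where x="\<lambda>n y. 0"]) simp
qed

lemma coset_eqI:
  assumes K: "subgrp K" and d: "(\<lambda>n y. x n y - z n y) \<in> K"
  shows "coset K x = coset K z"
proof
  show "coset K x \<subseteq> coset K z"
  proof
    fix u assume "u \<in> coset K x"
    then obtain k where k: "k \<in> K" "u = (\<lambda>n y. x n y + k n y)" unfolding coset_def by blast
    have "(\<lambda>n y. (x n y - z n y) + k n y) \<in> K" using subgrp_add[OF K d k(1)] .
    moreover have "u = (\<lambda>n y. z n y + ((x n y - z n y) + k n y))" using k(2) by (simp add: algebra_simps)
    ultimately show "u \<in> coset K z" by (rule coset_memI)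
  qed
next
  show "coset K z \<subseteq> coset K x"
  proof
    fix u assume "u \<in> coset K z"
    then obtain k where k: "k \<in> K" "u = (\<lambda>n y. z n y + k n y)" unfolding coset_def by blast
    have "(\<lambda>n y. k n y - (x n y - z n y)) \<in> K" using subgrp_diff[OF K k(1) d] .
    moreover have "u = (\<lambda>n y. x n y + (k n y - (x n y - z n y)))" using k(2) by (simp add: algebra_simps)
    ultimately show "u \<in> coset K x" by (rule coset_memI)
  qed
qed

lemma coset_eqD:
  assumes K: "subgrp K" and e: "coset K x = coset K z"
  shows "(\<lambda>n y. x n y - z n y) \<in> K"
proof -
  have "z \<in> coset K x" using e coset_self[OF K] by blast
  then obtain k where k: "k \<in> K" "z = (\<lambda>n y. x n y + k n y)" unfolding coset_def by blast
  have "(\<lambda>n y. - k n y) \<in> K" using subgrp_neg[OF K k(1)] .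
  moreover have "(\<lambda>n y. x n y - z n y) = (\<lambda>n y. - k n y)" using k(2) by simp
  ultimately show ?thesis by simp
qed

lemma coset_eq_K:
  assumes K: "subgrp K" and e: "coset K x = K"
  shows "x \<in> K"
  using coset_self[OF K, of x] e by simp

lemma coset_zero: "coset K (\<lambda>n y. 0) = K"
  unfolding coset_def by simp

lemma tower_facts:
  assumes "tower X pt phi"
  shows "pt n \<in> X n" "m \<le> n \<Longrightarrow> x \<in> X n \<Longrightarrow> phi n m x \<in> X m" "m \<le> n \<Longrightarrow> phi n m (pt n) = pt m"
    "x \<in> X n \<Longrightarrow> phi n n x = x" "k \<le> m \<Longrightarrow> m \<le> n \<Longrightarrow> x \<in> X n \<Longrightarrow> phi m k (phi n m x) = phi n k x"
  using assms unfolding tower_def by blast+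

lemma pt_limX: "tower X pt phi \<Longrightarrow> pt \<in> limX X phi"
  unfolding limX_def mem_Collect_eq using tower_facts(1,3) by metis

lemma smash_add: "a \<in> smash Y y0 \<Longrightarrow> b \<in> smash Y y0 \<Longrightarrow> (\<lambda>y. a y + b y) \<in> smash Y y0"
proof -
  assume a: "a \<in> smash Y y0" and b: "b \<in> smash Y y0"
  have "{y. a y + b y \<noteq> 0} \<subseteq> {y. a y \<noteq> 0} \<union> {y. b y \<noteq> 0}" by auto
  moreover have "finite ({y. a y \<noteq> 0} \<union> {y. b y \<noteq> 0})" using a b unfolding smash_def by simp
  ultimately have "finite {y. a y + b y \<noteq> 0}" by (rule finite_subset)
  moreover have "\<forall>y. a y + b y \<noteq> 0 \<longrightarrow> y \<in> Y \<and> y \<noteq> y0"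
  proof (intro allI impI)
    fix y assume "a y + b y \<noteq> 0"
    then have "a y \<noteq> 0 \<or> b y \<noteq> 0" by auto
    then show "y \<in> Y \<and> y \<noteq> y0" using a b unfolding smash_def by auto
  qed
  ultimately show ?thesis unfolding smash_def by simp
qed

lemma smash_comp: "additive h \<Longrightarrow> a \<in> smash Y y0 \<Longrightarrow> (\<lambda>y. h (a y)) \<in> smash Y y0"
proof -
  assume h: "additive h" and a: "a \<in> smash Y y0"
  have "{y. h (a y) \<noteq> 0} \<subseteq> {y. a y \<noteq> 0}" using additive_0[OF h] by auto
  moreover have "finite {y. a y \<noteq> 0}" using a unfolding smash_def by simp
  ultimately have "finite {y. h (a y) \<noteq> 0}" by (rule finite_subset)
  moreover have "\<forall>y. h (a y) \<noteq> 0 \<longrightarrow> y \<in> Y \<and> y \<noteq> y0"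
  proof (intro allI impI)
    fix y assume "h (a y) \<noteq> 0"
    then have "a y \<noteq> 0" using additive_0[OF h] by auto
    then show "y \<in> Y \<and> y \<noteq> y0" using a unfolding smash_def by auto
  qed
  ultimately show ?thesis unfolding smash_def by simp
qed

lemma additive_uminus_fun: "additive (uminus :: 'a::ab_group_add \<Rightarrow> 'a)"
  unfolding additive_def by simp

lemma smash_diff: "a \<in> smash Y y0 \<Longrightarrow> b \<in> smash Y y0 \<Longrightarrow> (\<lambda>y. a y - b y) \<in> smash Y y0"
  using smash_add[of a Y y0 "\<lambda>y. - b y"] smash_comp[OF additive_uminus_fun, of b Y y0] by simp

lemma smash_zero: "(\<lambda>y. 0) \<in> smash Y y0"
  unfolding smash_def by simp

lemma smash_map_diff:
  assumes "finite {s. v s \<noteq> 0}" "finite {s. w s \<noteq> 0}"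
  shows "smash_map f z0 (\<lambda>s. v s - w s) t = smash_map f z0 v t - smash_map f z0 w t"
proof -
  have fw: "finite {s. - w s \<noteq> 0}" using assms(2) by simp
  have "smash_map f z0 (\<lambda>s. v s + (- w s)) t = smash_map f z0 v t + smash_map f z0 (\<lambda>s. - w s) t"
    by (rule smash_map_add[OF assms(1) fw])
  moreover have "smash_map f z0 (\<lambda>s. - w s) t = - smash_map f z0 w t"
    using smash_map_comm[OF additive_uminus_fun assms(2), of f z0 t] by simp
  ultimately show ?thesis by simp
qed

lemma GsetI:
  assumes "\<And>n. a n \<in> smash (X n) (pt n)"
    "\<And>n m. m \<le> n \<Longrightarrow> smash_map (phi n m) (pt m) (a n) = a m"
  shows "a \<in> Gset X pt phi"
  unfolding Gset_def mem_Collect_eq using assms by blast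

lemma GsetD1: "a \<in> Gset X pt phi \<Longrightarrow> a n \<in> smash (X n) (pt n)"
  unfolding Gset_def mem_Collect_eq by blast

lemma GsetD2: "a \<in> Gset X pt phi \<Longrightarrow> m \<le> n \<Longrightarrow> smash_map (phi n m) (pt m) (a n) = a m"
  unfolding Gset_def mem_Collect_eq by blast

lemma Gset_diff:
  assumes a: "a \<in> Gset X pt phi" and b: "b \<in> Gset X pt phi"
  shows "(\<lambda>n y. a n y - b n y) \<in> Gset X pt phi"
proof (rule GsetI)
  fix n
  show "(\<lambda>y. a n y - b n y) \<in> smash (X n) (pt n)" by (rule smash_diff[OF GsetD1[OF a] GsetD1[OF b]])
next
  fix n m :: nat assume that: "m \<le> n"
  show "smash_map (phi n m) (pt m) (\<lambda>y. a n y - b n y) = (\<lambda>y. a m y - b m y)"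
  proof
    fix t
    have "smash_map (phi n m) (pt m) (\<lambda>y. a n y - b n y) t = smash_map (phi n m) (pt m) (a n) t - smash_map (phi n m) (pt m) (b n) t"
      by (rule smash_map_diff[OF smash_finite[OF GsetD1[OF a]] smash_finite[OF GsetD1[OF b]]])
    also have "\<dots> = a m t - b m t" using GsetD2[OF a that] GsetD2[OF b that] by simp
    finally show "smash_map (phi n m) (pt m) (\<lambda>y. a n y - b n y) t = a m t - b m t" .
  qed
qed

lemma Gmap_Gset:
  assumes h: "additive h" and a: "a \<in> Gset X pt phi"
  shows "Gmap h a \<in> Gset X pt phi"
  unfolding Gmap_def
proof (rule GsetI)
  fix n
  show "(\<lambda>y. h (a n y)) \<in> smash (X n) (pt n)" by (rule smash_comp[OF h GsetD1[OF a]])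
next
  fix n m :: nat assume that: "m \<le> n"
  show "smash_map (phi n m) (pt m) (\<lambda>y. h (a n y)) = (\<lambda>y. h (a m y))"
  proof
    fix t
    have "h (smash_map (phi n m) (pt m) (a n) t) = smash_map (phi n m) (pt m) (\<lambda>y. h (a n y)) t"
      by (rule smash_map_comm[OF h smash_finite[OF GsetD1[OF a]]])
    then show "smash_map (phi n m) (pt m) (\<lambda>y. h (a n y)) t = h (a m t)"
      using GsetD2[OF a that] by simp
  qed
qed

lemma rho_Gset:
  assumes T: "tower X pt phi" and w: "w \<in> smash (limX X phi) pt"
  shows "rho pt w \<in> Gset X pt phi"
proof -
  have fw: "finite {s. w s \<noteq> 0}" using w by (rule smash_finite)
  have wl: "w x \<noteq> 0 \<Longrightarrow> x \<in> limX X phi" for x using w unfolding smash_def by auto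
  have "rho pt w n \<in> smash (X n) (pt n)" for n
  proof -
    have "smash_map (\<lambda>x. x n) (pt n) w \<in> smash (X n) (pt n)"
    proof (rule smash_map_in[OF fw])
      fix s assume "w s \<noteq> 0"
      then have "s \<in> limX X phi" by (rule wl)
      then show "s n \<in> X n" unfolding limX_def by simp
    qed
    then show ?thesis unfolding rho_def .
  qed
  moreover have "smash_map (phi n m) (pt m) (rho pt w n) = rho pt w m" if "m \<le> n" for n m
  proof -
    have "smash_map (phi n m) (pt m) (smash_map (\<lambda>x. x n) (pt n) w) = smash_map (\<lambda>x. x m) (pt m) w"
    proof (rule smash_map_comp[OF fw])
      show "phi n m (pt n) = pt m" using tower_facts(3)[OF T that] .
      fix s assume "w s \<noteq> 0"
      then have "s \<in> limX X phi" by (rule wl)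
      then show "phi n m (s n) = s m" unfolding limX_def using that by simp
    qed
    then show ?thesis unfolding rho_def .
  qed
  ultimately show ?thesis by (rule GsetI)
qed

lemma rho_diff:
  assumes "v \<in> smash Y y0" "w \<in> smash Y y0"
  shows "rho pt (\<lambda>x. v x - w x) = (\<lambda>n y. rho pt v n y - rho pt w n y)"
proof (intro ext)
  fix n y
  show "rho pt (\<lambda>x. v x - w x) n y = rho pt v n y - rho pt w n y"
    unfolding rho_def by (rule smash_map_diff[OF smash_finite[OF assms(1)] smash_finite[OF assms(2)]])
qed

lemma rho_comp:
  assumes "additive h" "w \<in> smash Y y0"
  shows "rho pt (\<lambda>x. h (w x)) = Gmap h (rho pt w)"
proof (intro ext)
  fix n y
  show "rho pt (\<lambda>x. h (w x)) n y = Gmap h (rho pt w) n y"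
    using smash_map_comm[OF assms(1) smash_finite[OF assms(2)], of "\<lambda>x. x n" "pt n" y]
    unfolding rho_def Gmap_def by simp
qed

lemma K_subgrp: "subgrp (Kset X pt phi :: (nat \<Rightarrow> 'x \<Rightarrow> 'a::ab_group_add) set)"
  unfolding subgrp_def Kset_def
proof (intro conjI ballI)
  have "rho pt (\<lambda>x. 0) = (\<lambda>n y. 0)" unfolding rho_def smash_map_def by (intro ext) simp
  moreover have "(\<lambda>x. 0) \<in> smash (limX X phi) pt" by (rule smash_zero)
  ultimately show "(\<lambda>n y. 0) \<in> rho pt ` smash (limX X phi) pt" by (rule image_eqI[OF sym])
next
  fix a b :: "nat \<Rightarrow> 'x \<Rightarrow> 'a" assume a: "a \<in> rho pt ` smash (limX X phi) pt" and b: "b \<in> rho pt ` smash (limX X phi) pt"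
  from a obtain v where v': "a = rho pt v" "v \<in> smash (limX X phi) pt" by (rule imageE)
  from b obtain w where w': "b = rho pt w" "w \<in> smash (limX X phi) pt" by (rule imageE)
  note v = v'(2,1) and w = w'(2,1)
  have "(\<lambda>n y. a n y - b n y) = rho pt (\<lambda>x. v x - w x)" using rho_diff[OF v(1) w(1)] v(2) w(2) by simp
  moreover have "(\<lambda>x. v x - w x) \<in> smash (limX X phi) pt" by (rule smash_diff[OF v(1) w(1)])
  ultimately show "(\<lambda>n y. a n y - b n y) \<in> rho pt ` smash (limX X phi) pt" by (rule image_eqI)
qed

lemma K_Gmap: "additive h \<Longrightarrow> k \<in> Kset X pt phi \<Longrightarrow> Gmap h k \<in> Kset X pt phi"
  unfolding Kset_def proof -
  assume h: "additive h" and kk: "k \<in> rho pt ` smash (limX X phi) pt"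
  from kk obtain w where w': "k = rho pt w" "w \<in> smash (limX X phi) pt" by (rule imageE)
  note w = w'(2,1)
  have "Gmap h k = rho pt (\<lambda>x. h (w x))" using rho_comp[OF h w(1)] w(2) by simp
  moreover have "(\<lambda>x. h (w x)) \<in> smash (limX X phi) pt" using smash_comp[OF h w(1)] .
  ultimately show "Gmap h k \<in> rho pt ` smash (limX X phi) pt" by (rule image_eqI)
qed

lemma K_Gset: "tower X pt phi \<Longrightarrow> Kset X pt phi \<subseteq> Gset X pt phi"
  unfolding Kset_def using rho_Gset by (metis image_subsetI)

lemma Gmap_diff: "additive h \<Longrightarrow> Gmap h (\<lambda>n y. a n y - b n y) = (\<lambda>n y. Gmap h a n y - Gmap h b n y)"
  unfolding Gmap_def by (simp add: additive_diff)

lemma Hmap_coset: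
  fixes g :: "nat \<Rightarrow> 'x \<Rightarrow> 'a::ab_group_add" and h :: "'a \<Rightarrow> 'b::ab_group_add"
  assumes h: "additive h"
  shows "Hmap X pt phi h (coset (Kset X pt phi) g) = coset (Kset X pt phi) (Gmap h g)"
proof -
  let ?K = "Kset X pt phi :: (nat \<Rightarrow> 'x \<Rightarrow> 'a) set"
  let ?g = "SOME g'. g' \<in> coset ?K g"
  have "?g \<in> coset ?K g" by (rule someI[of _ g]) (rule coset_self[OF K_subgrp])
  then obtain k where k: "k \<in> ?K" "?g = (\<lambda>n y. g n y + k n y)" unfolding coset_def by blast
  have "(\<lambda>n y. ?g n y - g n y) = k" by (subst k(2)) simp
  then have "(\<lambda>n y. ?g n y - g n y) \<in> ?K" using k(1) by simp
  then have "Gmap h (\<lambda>n y. ?g n y - g n y) \<in> Kset X pt phi" by (rule K_Gmap[OF h])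
  moreover have eq: "Gmap h (\<lambda>n y. ?g n y - g n y) = (\<lambda>n y. Gmap h ?g n y - Gmap h g n y)"
    by (rule Gmap_diff[OF h])
  ultimately have "(\<lambda>n y. Gmap h ?g n y - Gmap h g n y) \<in> Kset X pt phi" by simp
  then show ?thesis unfolding Hmap_def by (rule coset_eqI[OF K_subgrp])
qed

lemma limX_sep:
  assumes T: "tower X pt phi" and x: "x \<in> limX X phi" and y: "y \<in> limX X phi" and ne: "x \<noteq> y"
  shows "\<exists>k. \<forall>n\<ge>k. x n \<noteq> y n"
proof -
  obtain k where k: "x k \<noteq> y k" using ne by (meson ext)
  have "x n \<noteq> y n" if "n \<ge> k" for n
  proof
    assume "x n = y n"
    then have "phi n k (x n) = phi n k (y n)" by simp
    then show False using x y k that unfolding limX_def by simp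
  qed
  then show ?thesis by blast
qed

lemma limX_inj:
  assumes T: "tower X pt phi" and S: "finite S" "S \<subseteq> limX X phi"
  shows "\<exists>N. inj_on (\<lambda>x. x N) S"
proof -
  let ?P = "{p. fst p \<in> S \<and> snd p \<in> S \<and> fst p \<noteq> snd p}"
  have "\<forall>p\<in>?P. \<exists>k. \<forall>n\<ge>k. fst p n \<noteq> snd p n"
    using limX_sep[OF T] S(2) by blast
  from bchoice[OF this] obtain K where K: "\<forall>p\<in>?P. \<forall>n\<ge>K p. fst p n \<noteq> snd p n" by blast
  have "?P \<subseteq> S \<times> S" by auto
  then have "finite ?P" using S(1) by (meson finite_SigmaI finite_subset)
  then have "finite (K ` ?P)" by simp
  then obtain N where N: "\<forall>k\<in>K ` ?P. k \<le> N" using finite_nat_set_iff_bounded_le by blast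
  have "inj_on (\<lambda>x. x N) S"
  proof (rule inj_onI)
    fix x y assume xy: "x \<in> S" "y \<in> S" "x N = y N"
    show "x = y"
    proof (rule ccontr)
      assume "x \<noteq> y"
      then have p: "(x, y) \<in> ?P" using xy by simp
      then have "K (x, y) \<le> N" using N by blast
      then have "x N \<noteq> y N" using K p by fastforce
      then show False using xy(3) by simp
    qed
  qed
  then show ?thesis by blast
qed

lemma rho_val:
  assumes T: "tower X pt phi" and w: "w \<in> smash (limX X phi) pt"
  shows "\<exists>N. \<forall>x. w x \<noteq> 0 \<longrightarrow> rho pt w N (x N) = w x"
proof -
  let ?F = "{s. w s \<noteq> 0}"
  have fF: "finite ?F" using w by (rule smash_finite)
  have wl: "w x \<noteq> 0 \<Longrightarrow> x \<in> limX X phi \<and> x \<noteq> pt" for x using w unfolding smash_def by auto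
  have "finite (insert pt ?F)" using fF by simp
  moreover have "insert pt ?F \<subseteq> limX X phi" using wl pt_limX[OF T] by auto
  ultimately obtain N where N: "inj_on (\<lambda>x. x N) (insert pt ?F)" using limX_inj[OF T] by blast
  have "rho pt w N (x N) = w x" if x: "w x \<noteq> 0" for x
  proof -
    have "x N \<noteq> pt N"
      by (rule inj_on_contraD[OF N]) (use x wl[OF x] in auto)
    moreover have "{s\<in>?F. s N = x N} = {x}" using N x by (auto dest: inj_onD)
    ultimately show ?thesis unfolding rho_def using smash_map_alt[OF fF order_refl, of "\<lambda>s. s N" "pt N" "x N"]
      by simp
  qed
  then show ?thesis by blast
qed

lemma K_lift:
  assumes T: "tower X pt phi" and h: "additive h" and w: "w \<in> smash (limX X phi) pt"
    and r: "\<And>n y. rho pt w n y \<in> range h"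
  shows "\<exists>w'\<in>smash (limX X phi) pt. (\<lambda>x. h (w' x)) = w"
proof -
  define w' where "w' x = (if w x = 0 then 0 else (SOME a. h a = w x))" for x
  obtain N where N: "\<forall>x. w x \<noteq> 0 \<longrightarrow> rho pt w N (x N) = w x" using rho_val[OF T w] by blast
  have "h (w' x) = w x" for x
  proof (cases "w x = 0")
    case True then show ?thesis unfolding w'_def using additive_0[OF h] by simp
  next
    case False
    then have "w x \<in> range h" using N r by metis
    then have "\<exists>a. h a = w x" by (metis rangeE)
    then have "h (SOME a. h a = w x) = w x" by (rule someI_ex)
    then show ?thesis unfolding w'_def using False by simp
  qed
  moreover have "w' \<in> smash (limX X phi) pt"
  proof -
    have "{x. w' x \<noteq> 0} \<subseteq> {x. w x \<noteq> 0}" unfolding w'_def by auto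
    then have "finite {x. w' x \<noteq> 0}" using smash_finite[OF w] by (rule finite_subset)
    then show ?thesis using w \<open>{x. w' x \<noteq> 0} \<subseteq> {x. w x \<noteq> 0}\<close> unfolding smash_def by blast
  qed
  ultimately show ?thesis by blast
qed

lemma ker_lift:
  assumes f: "additive f" "inj f" and b: "b \<in> Gset X pt phi" and r: "\<And>n y. b n y \<in> range f"
  shows "\<exists>a\<in>Gset X pt phi. Gmap f a = b"
proof -
  define a where "a n y = inv f (b n y)" for n y
  have fa: "f (a n y) = b n y" for n y unfolding a_def using r by (simp add: f_inv_into_f)
  have supp: "{y. a n y \<noteq> 0} = {y. b n y \<noteq> 0}" for n
    using fa additive_0[OF f(1)] f(2) by (metis injD)
  have "a n \<in> smash (X n) (pt n)" for n
    using b supp[of n] unfolding Gset_def smash_def by auto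
  moreover have "smash_map (phi n m) (pt m) (a n) = a m" if "m \<le> n" for n m
  proof
    fix t
    have "f (smash_map (phi n m) (pt m) (a n) t) = smash_map (phi n m) (pt m) (\<lambda>y. f (a n y)) t"
      by (rule smash_map_comm[OF f(1)]) (use smash_finite[OF calculation] in simp)
    also have "\<dots> = smash_map (phi n m) (pt m) (b n) t" using fa by simp
    also have "\<dots> = b m t" using b that unfolding Gset_def by simp
    also have "\<dots> = f (a m t)" using fa by simp
    finally show "smash_map (phi n m) (pt m) (a n) t = a m t" using f(2) by (simp add: inj_eq)
  qed
  ultimately have "a \<in> Gset X pt phi" unfolding Gset_def by simp
  moreover have "Gmap f a = b" unfolding Gmap_def using fa by simp
  ultimately show ?thesis by blast
qed

lemma G_inj: "inj f \<Longrightarrow> inj_on (Gmap f) A"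
  unfolding Gmap_def by (rule inj_onI) (metis ext injD)

lemma G_exact:
  fixes f :: "'a::ab_group_add \<Rightarrow> 'b::ab_group_add" and g :: "'b \<Rightarrow> 'c::ab_group_add"
  assumes f: "additive f" "inj f" and g: "additive g" and ex: "{b. g b = 0} = range f"
  shows "exact_at (Gset X pt phi :: (nat \<Rightarrow> 'x \<Rightarrow> 'a) set) (Gset X pt phi) (\<lambda>n y. 0 :: 'c) (Gmap f) (Gmap g)"
  unfolding exact_at_def
proof
  show "{b \<in> Gset X pt phi. Gmap g b = (\<lambda>n y. 0)} \<subseteq> Gmap f ` Gset X pt phi"
  proof
    fix b assume "b \<in> {b \<in> Gset X pt phi. Gmap g b = (\<lambda>n y. 0)}"
    then have b: "b \<in> Gset X pt phi" and gb: "\<And>n y. g (b n y) = 0" unfolding Gmap_def by (auto dest: fun_cong)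
    have "b n y \<in> range f" for n y using gb ex by blast
    then show "b \<in> Gmap f ` Gset X pt phi" using ker_lift[OF f b] by blast
  qed
next
  show "Gmap f ` Gset X pt phi \<subseteq> {b \<in> Gset X pt phi. Gmap g b = (\<lambda>n y. 0)}"
  proof
    fix b assume "b \<in> Gmap f ` Gset X pt phi"
    then obtain a where a: "a \<in> Gset X pt phi" "b = Gmap f a" by blast
    have "g (f x) = 0" for x using ex by blast
    then show "b \<in> {b \<in> Gset X pt phi. Gmap g b = (\<lambda>n y. 0)}"
      using a Gmap_Gset[OF f(1) a(1)] unfolding Gmap_def by simp
  qed
qed

lemma HsetE:
  assumes "c \<in> Hset X pt phi"
  obtains a where "a \<in> Gset X pt phi" "c = coset (Kset X pt phi) a"
  using assms unfolding Hset_def by (rule imageE)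

lemma HsetI: "a \<in> Gset X pt phi \<Longrightarrow> coset (Kset X pt phi) a \<in> Hset X pt phi"
  unfolding Hset_def by (rule imageI)

lemma KsetE:
  assumes "k \<in> Kset X pt phi"
  obtains w where "w \<in> smash (limX X phi) pt" "k = rho pt w"
  using assms unfolding Kset_def by (rule imageE)

lemma Gmap_comp_zero:
  assumes "\<And>x. g (f x) = 0"
  shows "Gmap g (Gmap f a) = (\<lambda>n y. 0)"
  unfolding Gmap_def using assms by simp

lemma H_inj:
  fixes f :: "'a::ab_group_add \<Rightarrow> 'b::ab_group_add"
    and X :: "nat \<Rightarrow> 'x set"
  assumes T: "tower X pt phi" and f: "additive f" "inj f"
  shows "inj_on (Hmap X pt phi f) (Hset X pt phi :: (nat \<Rightarrow> 'x \<Rightarrow> 'a) set set)"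
proof (rule inj_onI)
  fix c1 c2 :: "(nat \<Rightarrow> 'x \<Rightarrow> 'a) set"
  assume c1: "c1 \<in> Hset X pt phi" and c2: "c2 \<in> Hset X pt phi"
    and eq: "Hmap X pt phi f c1 = Hmap X pt phi f c2"
  obtain a1 where a1: "a1 \<in> Gset X pt phi" "c1 = coset (Kset X pt phi) a1" using c1 by (rule HsetE)
  obtain a2 where a2: "a2 \<in> Gset X pt phi" "c2 = coset (Kset X pt phi) a2" using c2 by (rule HsetE)
  have "coset (Kset X pt phi) (Gmap f a1) = coset (Kset X pt phi) (Gmap f a2)"
    using eq unfolding a1(2) a2(2) Hmap_coset[OF f(1)] .
  then have d: "(\<lambda>n y. Gmap f a1 n y - Gmap f a2 n y) \<in> Kset X pt phi"
    by (rule coset_eqD[OF K_subgrp])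
  define d where "d = (\<lambda>n y. a1 n y - a2 n y)"
  have e: "Gmap f d = (\<lambda>n y. Gmap f a1 n y - Gmap f a2 n y)" unfolding d_def by (rule Gmap_diff[OF f(1)])
  have "Gmap f d \<in> Kset X pt phi" using d e by simp
  then obtain w where w: "w \<in> smash (limX X phi) pt" "Gmap f d = rho pt w" by (rule KsetE)
  have r: "rho pt w n y \<in> range f" for n y using w(2) unfolding Gmap_def by (metis rangeI)
  obtain w' where w': "w' \<in> smash (limX X phi) pt" "(\<lambda>x. f (w' x)) = w" using K_lift[OF T f(1) w(1) r] by blast
  have "Gmap f (rho pt w') = rho pt w" using rho_comp[OF f(1) w'(1)] w'(2) by simp
  then have "Gmap f (rho pt w') = Gmap f d" using w(2) by simp
  then have "rho pt w' = d" using G_inj[OF f(2), of UNIV] by (meson UNIV_I inj_onD)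
  then have "d \<in> Kset X pt phi" using w'(1) unfolding Kset_def by (metis imageI)
  then show "c1 = c2" unfolding a1(2) a2(2) d_def by (rule coset_eqI[OF K_subgrp])
qed

lemma H_exact:
  fixes f :: "'a::ab_group_add \<Rightarrow> 'b::ab_group_add" and g :: "'b \<Rightarrow> 'c::ab_group_add"
    and X :: "nat \<Rightarrow> 'x set"
  assumes T: "tower X pt phi" and f: "additive f" "inj f" and g: "additive g" and ex: "{b. g b = 0} = range f"
  shows "exact_at (Hset X pt phi :: (nat \<Rightarrow> 'x \<Rightarrow> 'a) set set) (Hset X pt phi)
            (Kset X pt phi) (Hmap X pt phi f) (Hmap X pt phi g)"
  unfolding exact_at_def
proof
  have gf: "g (f x) = 0" for x using ex by blast
  show "{b \<in> Hset X pt phi. Hmap X pt phi g b = Kset X pt phi} \<subseteq> Hmap X pt phi f ` Hset X pt phi"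
  proof
    fix c :: "(nat \<Rightarrow> 'x \<Rightarrow> 'b) set"
    assume "c \<in> {b \<in> Hset X pt phi. Hmap X pt phi g b = Kset X pt phi}"
    then have c: "c \<in> Hset X pt phi" and gc: "Hmap X pt phi g c = Kset X pt phi" by auto
    obtain b where b: "b \<in> Gset X pt phi" "c = coset (Kset X pt phi) b" using c by (rule HsetE)
    have "coset (Kset X pt phi) (Gmap g b) = Kset X pt phi" using gc unfolding b(2) Hmap_coset[OF g] .
    then have "Gmap g b \<in> Kset X pt phi" by (rule coset_eq_K[OF K_subgrp])
    then obtain w where w: "w \<in> smash (limX X phi) pt" "Gmap g b = rho pt w" by (rule KsetE)
    have r: "rho pt w n y \<in> range g" for n y using w(2) unfolding Gmap_def by (metis rangeI)
    obtain w' where w': "w' \<in> smash (limX X phi) pt" "(\<lambda>x. g (w' x)) = w" using K_lift[OF T g w(1) r] by blast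
    have gw: "Gmap g (rho pt w') = rho pt w" using rho_comp[OF g w'(1)] w'(2) by simp
    define b' where "b' = (\<lambda>n y. b n y - rho pt w' n y)"
    have b'G: "b' \<in> Gset X pt phi" unfolding b'_def by (rule Gset_diff[OF b(1) rho_Gset[OF T w'(1)]])
    have "Gmap g b' = (\<lambda>n y. Gmap g b n y - Gmap g (rho pt w') n y)" unfolding b'_def by (rule Gmap_diff[OF g])
    also have "\<dots> = (\<lambda>n y. 0)" unfolding gw w(2) by simp
    finally have "b' \<in> {b \<in> Gset X pt phi. Gmap g b = (\<lambda>n y. 0)}" using b'G by simp
    then have "b' \<in> Gmap f ` Gset X pt phi" using G_exact[OF f g ex, of X pt phi] unfolding exact_at_def by simp
    then obtain a where a: "a \<in> Gset X pt phi" "b' = Gmap f a" by blast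
    have "(\<lambda>n y. b n y - b' n y) = rho pt w'" unfolding b'_def by simp
    then have "(\<lambda>n y. b n y - b' n y) \<in> Kset X pt phi" using w'(1) unfolding Kset_def by (metis imageI)
    then have "c = coset (Kset X pt phi) b'" unfolding b(2) by (rule coset_eqI[OF K_subgrp])
    also have "\<dots> = Hmap X pt phi f (coset (Kset X pt phi) a)" unfolding Hmap_coset[OF f(1)] a(2) ..
    finally show "c \<in> Hmap X pt phi f ` Hset X pt phi" using HsetI[OF a(1)] by blast
  qed
next
  have gf: "g (f x) = 0" for x using ex by blast
  show "Hmap X pt phi f ` Hset X pt phi \<subseteq> {b \<in> Hset X pt phi. Hmap X pt phi g b = Kset X pt phi}"
  proof
    fix c :: "(nat \<Rightarrow> 'x \<Rightarrow> 'b) set"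
    assume "c \<in> Hmap X pt phi f ` (Hset X pt phi :: (nat \<Rightarrow> 'x \<Rightarrow> 'a) set set)"
    then obtain c0 :: "(nat \<Rightarrow> 'x \<Rightarrow> 'a) set" where c0: "c0 \<in> Hset X pt phi" "c = Hmap X pt phi f c0" by blast
    obtain a where a: "a \<in> Gset X pt phi" "c0 = coset (Kset X pt phi) a" using c0(1) by (rule HsetE)
    have c: "c = coset (Kset X pt phi) (Gmap f a)" unfolding c0(2) a(2) Hmap_coset[OF f(1)] ..
    have "c \<in> Hset X pt phi" unfolding c by (rule HsetI[OF Gmap_Gset[OF f(1) a(1)]])
    moreover have "Hmap X pt phi g c = Kset X pt phi"
      unfolding c Hmap_coset[OF g] Gmap_comp_zero[of g f, OF gf] by (rule coset_zero)
    ultimately show "c \<in> {b \<in> Hset X pt phi. Hmap X pt phi g b = Kset X pt phi}" by simp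
  qed
qed

abbreviation Tm where "Tm phi pt n m v \<equiv> smash_map (phi n m) (pt m) v"

lemma Tm_smash:
  assumes T: "tower X pt phi" and mn: "m \<le> n" and v: "v \<in> smash (X n) (pt n)"
  shows "Tm phi pt n m v \<in> smash (X m) (pt m)"
proof (rule smash_map_in[OF smash_finite[OF v]])
  fix s assume "v s \<noteq> 0"
  then have "s \<in> X n" using v unfolding smash_def by auto
  then show "phi n m s \<in> X m" using tower_facts(2)[OF T mn] by blast
qed

lemma Tm_comp:
  assumes T: "tower X pt phi" and km: "k \<le> m" and mn: "m \<le> n" and v: "v \<in> smash (X n) (pt n)"
  shows "Tm phi pt m k (Tm phi pt n m v) = Tm phi pt n k v"
proof (rule smash_map_comp[OF smash_finite[OF v]])
  show "phi m k (pt m) = pt k" using tower_facts(3)[OF T km] .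
  fix s assume "v s \<noteq> 0"
  then have "s \<in> X n" using v unfolding smash_def by auto
  then show "phi m k (phi n m s) = phi n k s" using tower_facts(5)[OF T km mn] by blast
qed

lemma Tm_refl:
  assumes T: "tower X pt phi" and v: "v \<in> smash (X n) (pt n)"
  shows "Tm phi pt n n v = v"
proof (rule smash_map_id[OF smash_finite[OF v]])
  show "v (pt n) = 0" using v unfolding smash_def by auto
  fix s assume "v s \<noteq> 0"
  then have "s \<in> X n" using v unfolding smash_def by auto
  then show "phi n n s = s" using tower_facts(4)[OF T] by blast
qed

lemma Tm_lift:
  assumes T: "tower X pt phi" and nr: "n \<le> r" and d: "d \<in> smash (X n) (pt n)"
    and im: "\<And>y. d y \<noteq> 0 \<Longrightarrow> y \<in> phi r n ` X r"
  shows "\<exists>a\<in>smash (X r) (pt r). Tm phi pt r n a = d"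
proof -
  define \<sigma> where "\<sigma> y = (SOME x. x \<in> X r \<and> phi r n x = y)" for y
  have \<sigma>: "\<sigma> y \<in> X r \<and> phi r n (\<sigma> y) = y" if "d y \<noteq> 0" for y
  proof -
    have "\<exists>x. x \<in> X r \<and> phi r n x = y" using im[OF that] by blast
    then show ?thesis unfolding \<sigma>_def by (rule someI_ex)
  qed
  define a where "a = smash_map \<sigma> (pt r) d"
  have "a \<in> smash (X r) (pt r)" unfolding a_def
    by (rule smash_map_in[OF smash_finite[OF d]]) (use \<sigma> in blast)
  moreover have "Tm phi pt r n a = smash_map (\<lambda>y. phi r n (\<sigma> y)) (pt n) d" unfolding a_def
    by (rule smash_map_comp[OF smash_finite[OF d]]) (use tower_facts(3)[OF T nr] in auto)
  moreover have "smash_map (\<lambda>y. phi r n (\<sigma> y)) (pt n) d = d"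
    by (rule smash_map_id[OF smash_finite[OF d]]) (use d \<sigma> in \<open>auto simp: smash_def\<close>)
  ultimately show ?thesis by auto
qed

lemma dep_chain:
  assumes "P 0 x0" and step: "\<And>n x. P n x \<Longrightarrow> \<exists>z. P (Suc n) z \<and> Q n z x"
  shows "\<exists>e. \<forall>n. P n (e n) \<and> Q n (e (Suc n)) (e n)"
proof -
  define e where "e = rec_nat x0 (\<lambda>n x. SOME z. P (Suc n) z \<and> Q n z x)"
  have e0: "e 0 = x0" and eS: "e (Suc n) = (SOME z. P (Suc n) z \<and> Q n z (e n))" for n
    unfolding e_def by simp_all
  have "P n (e n)" for n
  proof (induction n)
    case 0 then show ?case using assms(1) e0 by simp
  next
    case (Suc n)
    then have "P (Suc n) (e (Suc n)) \<and> Q n (e (Suc n)) (e n)" unfolding eS by (rule someI_ex[OF step])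
    then show ?case by simp
  qed
  moreover have "Q n (e (Suc n)) (e n)" for n
  proof -
    have "P (Suc n) (e (Suc n)) \<and> Q n (e (Suc n)) (e n)" unfolding eS by (rule someI_ex[OF step[OF calculation]])
    then show ?thesis by simp
  qed
  ultimately show ?thesis by blast
qed

definition Lset where "Lset X pt g c n = {b \<in> smash (X n) (pt n). \<forall>y. g (b y) = c n y}"

lemma G_surj:
  fixes f :: "'a::ab_group_add \<Rightarrow> 'b::ab_group_add" and g :: "'b \<Rightarrow> 'c::ab_group_add"
    and X :: "nat \<Rightarrow> 'x set"
  assumes T: "tower X pt phi" and mlc: "mittag_leffler X phi"
    and f: "additive f" "inj f" and g: "additive g" and ex: "{b. g b = 0} = range f" and sg: "surj g"
    and c: "c \<in> Gset X pt phi"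
  shows "\<exists>b\<in>Gset X pt phi. Gmap g b = c"
proof -
  define L where "L = Lset X pt g c"
  have Lsm: "b \<in> L n \<Longrightarrow> b \<in> smash (X n) (pt n)" for b n unfolding L_def Lset_def by simp
  have Lg: "b \<in> L n \<Longrightarrow> g (b y) = c n y" for b n y unfolding L_def Lset_def by simp
  have LI: "b \<in> smash (X n) (pt n) \<Longrightarrow> (\<And>y. g (b y) = c n y) \<Longrightarrow> b \<in> L n" for b n
    unfolding L_def Lset_def by simp
  have g0: "g 0 = 0" by (rule additive_0[OF g])
  have f0: "f 0 = 0" by (rule additive_0[OF f(1)])
  have L_ne: "\<exists>b. b \<in> L n" for n
  proof -
    define b where "b y = (if c n y = 0 then 0 else (SOME z. g z = c n y))" for y
    have gb: "g (b y) = c n y" for y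
    proof (cases "c n y = 0")
      case True then show ?thesis unfolding b_def using g0 by simp
    next
      case False
      have "\<exists>z. g z = c n y" using sg by (metis surjD)
      then have "g (SOME z. g z = c n y) = c n y" by (rule someI_ex)
      then show ?thesis unfolding b_def using False by simp
    qed
    have cn: "c n \<in> smash (X n) (pt n)" by (rule GsetD1[OF c])
    have sub: "{y. b y \<noteq> 0} \<subseteq> {y. c n y \<noteq> 0}" unfolding b_def by auto
    have "finite {y. b y \<noteq> 0}" by (rule finite_subset[OF sub smash_finite[OF cn]])
    moreover have "\<forall>y. b y \<noteq> 0 \<longrightarrow> y \<in> X n \<and> y \<noteq> pt n" using sub cn unfolding smash_def by blast
    ultimately have "b \<in> smash (X n) (pt n)" unfolding smash_def by simp
    then show ?thesis using LI gb by blast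
  qed
  have L_T: "Tm phi pt n m b \<in> L m" if mn: "m \<le> n" and b: "b \<in> L n" for n m b
  proof (rule LI)
    show "Tm phi pt n m b \<in> smash (X m) (pt m)" by (rule Tm_smash[OF T mn Lsm[OF b]])
    fix y
    have "g (Tm phi pt n m b y) = smash_map (phi n m) (pt m) (\<lambda>s. g (b s)) y"
      by (rule smash_map_comm[OF g smash_finite[OF Lsm[OF b]]])
    also have "(\<lambda>s. g (b s)) = c n" using Lg[OF b] by (intro ext) simp
    also have "smash_map (phi n m) (pt m) (c n) = c m" by (rule GsetD2[OF c mn])
    finally show "g (Tm phi pt n m b y) = c m y" .
  qed
  have L_diff: "\<exists>a\<in>smash (X n) (pt n). \<forall>y. b y = b' y + f (a y)" if b: "b \<in> L n" and b': "b' \<in> L n" for n b b'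
  proof -
    define a where "a y = inv f (b y - b' y)" for y
    have r: "b y - b' y \<in> range f" for y
    proof -
      have "g (b y - b' y) = 0" using Lg[OF b] Lg[OF b'] additive_diff[OF g] by simp
      then show ?thesis using ex by blast
    qed
    have fa: "f (a y) = b y - b' y" for y unfolding a_def using r by (simp add: f_inv_into_f)
    have sub: "{y. a y \<noteq> 0} \<subseteq> {y. b y \<noteq> 0} \<union> {y. b' y \<noteq> 0}"
    proof
      fix y assume "y \<in> {y. a y \<noteq> 0}"
      then have "a y \<noteq> 0" by simp
      then have "f (a y) \<noteq> f 0" using f(2) by (simp add: inj_eq)
      then have "f (a y) \<noteq> 0" using f0 by simp
      then have "b y - b' y \<noteq> 0" using fa by simp
      then show "y \<in> {y. b y \<noteq> 0} \<union> {y. b' y \<noteq> 0}" by auto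
    qed
    have fin: "finite ({y. b y \<noteq> 0} \<union> {y. b' y \<noteq> 0})"
      using smash_finite[OF Lsm[OF b]] smash_finite[OF Lsm[OF b']] by simp
    have "finite {y. a y \<noteq> 0}" by (rule finite_subset[OF sub fin])
    moreover have "\<forall>y. a y \<noteq> 0 \<longrightarrow> y \<in> X n \<and> y \<noteq> pt n"
      using sub Lsm[OF b] Lsm[OF b'] unfolding smash_def by blast
    ultimately have "a \<in> smash (X n) (pt n)" unfolding smash_def by simp
    moreover have "\<forall>y. b y = b' y + f (a y)" using fa by simp
    ultimately show ?thesis by blast
  qed
  have L_add: "(\<lambda>y. b' y + f (a y)) \<in> L n" if b': "b' \<in> L n" and a: "a \<in> smash (X n) (pt n)" for n b' a
  proof (rule LI)
    show "(\<lambda>y. b' y + f (a y)) \<in> smash (X n) (pt n)" by (rule smash_add[OF Lsm[OF b'] smash_comp[OF f(1) a]])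
    fix y
    have "g (f (a y)) = 0" using ex by blast
    then show "g (b' y + f (a y)) = c n y" using Lg[OF b'] g unfolding additive_def by simp
  qed
  define I where "I r n = Tm phi pt r n ` L r" for r n
  have I_mono: "I r n \<subseteq> I s n" if "n \<le> s" "s \<le> r" for n s r
  proof
    fix x assume "x \<in> I r n"
    then obtain b where b: "x = Tm phi pt r n b" "b \<in> L r" unfolding I_def by (rule imageE)
    have "x = Tm phi pt s n (Tm phi pt r s b)" using Tm_comp[OF T that Lsm[OF b(2)]] b(1) by simp
    moreover have "Tm phi pt r s b \<in> L s" by (rule L_T[OF that(2) b(2)])
    ultimately show "x \<in> I s n" unfolding I_def by (rule image_eqI)
  qed
  from mlc have "\<forall>n. \<exists>s. s \<ge> n \<and> (\<forall>r\<ge>s. phi s n ` X s = phi r n ` X r)"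
    unfolding mittag_leffler_def by blast
  from choice[OF this] obtain \<sigma> where \<sigma>': "\<forall>n. \<sigma> n \<ge> n \<and> (\<forall>r\<ge>\<sigma> n. phi (\<sigma> n) n ` X (\<sigma> n) = phi r n ` X r)"
    ..
  have \<sigma>: "\<And>n. \<sigma> n \<ge> n" "\<And>n r. r \<ge> \<sigma> n \<Longrightarrow> phi (\<sigma> n) n ` X (\<sigma> n) = phi r n ` X r"
    using \<sigma>' by simp_all
  have I_stab: "I (\<sigma> n) n \<subseteq> I r n" if r: "r \<ge> \<sigma> n" for n r
  proof
    let ?s = "\<sigma> n"
    have ns: "n \<le> ?s" by (rule \<sigma>(1))
    have nr: "n \<le> r" using ns r by simp
    fix x assume "x \<in> I ?s n"
    then obtain b where b: "x = Tm phi pt ?s n b" "b \<in> L ?s" unfolding I_def by (rule imageE)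
    obtain b0 where b0: "b0 \<in> L r" using L_ne by blast
    define b1 where "b1 = Tm phi pt r ?s b0"
    have b1: "b1 \<in> L ?s" unfolding b1_def by (rule L_T[OF r b0])
    obtain a where a: "a \<in> smash (X ?s) (pt ?s)" "\<And>y. b y = b1 y + f (a y)" using L_diff[OF b(2) b1] by blast
    define d where "d = Tm phi pt ?s n a"
    have d: "d \<in> smash (X n) (pt n)" unfolding d_def by (rule Tm_smash[OF T ns a(1)])
    have dim: "y \<in> phi r n ` X r" if "d y \<noteq> 0" for y
    proof -
      have "y \<in> {t. Tm phi pt ?s n a t \<noteq> 0}" using that unfolding d_def by simp
      from subsetD[OF smash_map_supp[OF smash_finite[OF a(1)], of "phi ?s n" "pt n"] this]
      have "y \<in> phi ?s n ` {s. a s \<noteq> 0} - {pt n}" .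
      moreover have "{s. a s \<noteq> 0} \<subseteq> X ?s" using a(1) unfolding smash_def by blast
      ultimately have "y \<in> phi ?s n ` X ?s" by (meson DiffD1 image_mono subsetD)
      then show ?thesis using \<sigma>(2)[OF r] by simp
    qed
    obtain a' where a': "a' \<in> smash (X r) (pt r)" "Tm phi pt r n a' = d" using Tm_lift[OF T nr d dim] by blast
    define b' where "b' = (\<lambda>y. b0 y + f (a' y))"
    have b'L: "b' \<in> L r" unfolding b'_def by (rule L_add[OF b0 a'(1)])
    have "Tm phi pt r n b' = x"
    proof
      fix t
      have fb0: "finite {s. b0 s \<noteq> 0}" by (rule smash_finite[OF Lsm[OF b0]])
      have fa': "finite {s. f (a' s) \<noteq> 0}" by (rule smash_finite[OF smash_comp[OF f(1) a'(1)]])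
      have fb1: "finite {s. b1 s \<noteq> 0}" by (rule smash_finite[OF Lsm[OF b1]])
      have fa: "finite {s. f (a s) \<noteq> 0}" by (rule smash_finite[OF smash_comp[OF f(1) a(1)]])
      have "Tm phi pt r n b' t = Tm phi pt r n b0 t + Tm phi pt r n (\<lambda>y. f (a' y)) t"
        unfolding b'_def by (rule smash_map_add[OF fb0 fa'])
      also have "Tm phi pt r n (\<lambda>y. f (a' y)) t = f (Tm phi pt r n a' t)"
        by (rule smash_map_comm[OF f(1) smash_finite[OF a'(1)], symmetric])
      also have "\<dots> = f (d t)" using a'(2) by simp
      also have "\<dots> = Tm phi pt ?s n (\<lambda>y. f (a y)) t"
        unfolding d_def by (rule smash_map_comm[OF f(1) smash_finite[OF a(1)]])
      also have "Tm phi pt r n b0 = Tm phi pt ?s n b1"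
        unfolding b1_def by (rule Tm_comp[OF T ns r Lsm[OF b0], symmetric])
      also have "Tm phi pt ?s n b1 t + Tm phi pt ?s n (\<lambda>y. f (a y)) t = Tm phi pt ?s n (\<lambda>y. b1 y + f (a y)) t"
        by (rule smash_map_add[OF fb1 fa, symmetric])
      also have "(\<lambda>y. b1 y + f (a y)) = b" using a(2) by (intro ext) simp
      finally show "Tm phi pt r n b' t = x t" using b(1) by simp
    qed
    then show "x \<in> I r n" unfolding I_def using b'L by (rule image_eqI[OF sym])
  qed
  define S where "S n = I (\<sigma> n) n" for n
  have S_L: "S n \<subseteq> L n" for n
    unfolding S_def I_def using L_T[OF \<sigma>(1)] by blast
  have S_ne: "\<exists>x. x \<in> S n" for n
  proof -
    obtain b where "b \<in> L (\<sigma> n)" using L_ne by blast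
    then show ?thesis unfolding S_def I_def by blast
  qed
  have S_step: "\<exists>z. z \<in> S (Suc n) \<and> Tm phi pt (Suc n) n z = x" if x: "x \<in> S n" for n x
  proof -
    define r where "r = max (\<sigma> n) (\<sigma> (Suc n))"
    have r1: "\<sigma> n \<le> r" and r2: "\<sigma> (Suc n) \<le> r" unfolding r_def by simp_all
    have snr: "Suc n \<le> r" using \<sigma>(1)[of "Suc n"] r2 by simp
    have "x \<in> I r n" using I_stab[OF r1] x unfolding S_def by blast
    then obtain y where y: "x = Tm phi pt r n y" "y \<in> L r" unfolding I_def by (rule imageE)
    define z where "z = Tm phi pt r (Suc n) y"
    have "z \<in> I r (Suc n)" unfolding z_def I_def using y(2) by (rule imageI)
    then have "z \<in> S (Suc n)" unfolding S_def using I_mono[OF \<sigma>(1) r2] by blast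
    moreover have "Tm phi pt (Suc n) n z = x" unfolding z_def y(1)
      by (rule Tm_comp[OF T _ snr Lsm[OF y(2)]]) simp
    ultimately show ?thesis by blast
  qed
  obtain x0 where x0: "x0 \<in> S 0" using S_ne by blast
  have "\<exists>e. \<forall>n. e n \<in> S n \<and> Tm phi pt (Suc n) n (e (Suc n)) = e n"
    by (rule dep_chain[where P="\<lambda>n x. x \<in> S n" and Q="\<lambda>n z x. Tm phi pt (Suc n) n z = x", OF x0 S_step])
  then obtain e where e: "\<And>n. e n \<in> S n" "\<And>n. Tm phi pt (Suc n) n (e (Suc n)) = e n" by blast
  have eL: "e n \<in> L n" for n using e(1) S_L by blast
  have compat: "Tm phi pt (m + k) m (e (m + k)) = e m" for m k
  proof (induction k)
    case 0 then show ?case using Tm_refl[OF T Lsm[OF eL]] by simp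
  next
    case (Suc k)
    have "Tm phi pt (m + Suc k) m (e (m + Suc k)) = Tm phi pt (m + k) m (Tm phi pt (Suc (m + k)) (m + k) (e (Suc (m + k))))"
      using Tm_comp[OF T _ _ Lsm[OF eL], of m "m + k" "Suc (m + k)"] by simp
    also have "\<dots> = Tm phi pt (m + k) m (e (m + k))" using e(2) by simp
    finally show ?case using Suc.IH by simp
  qed
  have "e \<in> Gset X pt phi"
  proof (rule GsetI)
    show "e n \<in> smash (X n) (pt n)" for n by (rule Lsm[OF eL])
    fix n m :: nat assume "m \<le> n"
    then obtain k where "n = m + k" using le_Suc_ex by blast
    then show "Tm phi pt n m (e n) = e m" using compat by simp
  qed
  moreover have "Gmap g e = c" unfolding Gmap_def using Lg[OF eL] by (intro ext) simp
  ultimately show ?thesis by blast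
qed

lemma G_surj_eq:
  fixes f :: "'a::ab_group_add \<Rightarrow> 'b::ab_group_add" and g :: "'b \<Rightarrow> 'c::ab_group_add"
    and X :: "nat \<Rightarrow> 'x set"
  assumes T: "tower X pt phi" and mlc: "mittag_leffler X phi"
    and f: "additive f" "inj f" and g: "additive g" and ex: "{b. g b = 0} = range f" and sg: "surj g"
  shows "Gmap g ` (Gset X pt phi :: (nat \<Rightarrow> 'x \<Rightarrow> 'b) set) = Gset X pt phi"
proof
  show "Gmap g ` Gset X pt phi \<subseteq> Gset X pt phi" using Gmap_Gset[OF g] by blast
  show "Gset X pt phi \<subseteq> Gmap g ` (Gset X pt phi :: (nat \<Rightarrow> 'x \<Rightarrow> 'b) set)"
  proof
    fix c :: "nat \<Rightarrow> 'x \<Rightarrow> 'c" assume "c \<in> Gset X pt phi"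
    from G_surj[OF T mlc f g ex sg this] obtain b :: "nat \<Rightarrow> 'x \<Rightarrow> 'b" where "b \<in> Gset X pt phi" "Gmap g b = c"
      by blast
    then show "c \<in> Gmap g ` Gset X pt phi" by blast
  qed
qed

lemma H_surj_eq:
  fixes f :: "'a::ab_group_add \<Rightarrow> 'b::ab_group_add" and g :: "'b \<Rightarrow> 'c::ab_group_add"
    and X :: "nat \<Rightarrow> 'x set"
  assumes T: "tower X pt phi" and mlc: "mittag_leffler X phi"
    and f: "additive f" "inj f" and g: "additive g" and ex: "{b. g b = 0} = range f" and sg: "surj g"
  shows "Hmap X pt phi g ` (Hset X pt phi :: (nat \<Rightarrow> 'x \<Rightarrow> 'b) set set) = Hset X pt phi"
proof
  show "Hmap X pt phi g ` (Hset X pt phi :: (nat \<Rightarrow> 'x \<Rightarrow> 'b) set set) \<subseteq> Hset X pt phi"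
  proof
    fix c assume "c \<in> Hmap X pt phi g ` (Hset X pt phi :: (nat \<Rightarrow> 'x \<Rightarrow> 'b) set set)"
    then obtain c0 :: "(nat \<Rightarrow> 'x \<Rightarrow> 'b) set" where c0: "c0 \<in> Hset X pt phi" "c = Hmap X pt phi g c0" by blast
    obtain b where b: "b \<in> Gset X pt phi" "c0 = coset (Kset X pt phi) b" using c0(1) by (rule HsetE)
    have "c = coset (Kset X pt phi) (Gmap g b)" unfolding c0(2) b(2) Hmap_coset[OF g] ..
    then show "c \<in> Hset X pt phi" using HsetI[OF Gmap_Gset[OF g b(1)]] by simp
  qed
  show "Hset X pt phi \<subseteq> Hmap X pt phi g ` (Hset X pt phi :: (nat \<Rightarrow> 'x \<Rightarrow> 'b) set set)"
  proof
    fix c :: "(nat \<Rightarrow> 'x \<Rightarrow> 'c) set" assume "c \<in> Hset X pt phi"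
    then obtain a where a: "a \<in> Gset X pt phi" "c = coset (Kset X pt phi) a" by (rule HsetE)
    have "a \<in> Gmap g ` (Gset X pt phi :: (nat \<Rightarrow> 'x \<Rightarrow> 'b) set)" using G_surj_eq[OF T mlc f g ex sg] a(1) by blast
    then obtain b :: "nat \<Rightarrow> 'x \<Rightarrow> 'b" where b: "b \<in> Gset X pt phi" "a = Gmap g b" by blast
    have "c = Hmap X pt phi g (coset (Kset X pt phi) b)" unfolding a(2) b(2) Hmap_coset[OF g] ..
    then show "c \<in> Hmap X pt phi g ` Hset X pt phi" using HsetI[OF b(1)] by blast
  qed
qed

theorem mainTheorem12:
  fixes X :: "nat \<Rightarrow> 'x set" and pt :: "nat \<Rightarrow> 'x" and phi :: "nat \<Rightarrow> nat \<Rightarrow> 'x \<Rightarrow> 'x"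
  assumes "tower X pt phi"
  shows
   "(\<forall>(f :: 'a::ab_group_add \<Rightarrow> 'b::ab_group_add) (g :: 'b \<Rightarrow> 'c::ab_group_add).
       additive f \<and> additive g \<and> inj f \<and> {b. g b = 0} = range f \<longrightarrow>
         inj_on (Gmap f) (Gset X pt phi :: (nat \<Rightarrow> 'x \<Rightarrow> 'a) set) \<and>
         exact_at (Gset X pt phi :: (nat \<Rightarrow> 'x \<Rightarrow> 'a) set) (Gset X pt phi) (\<lambda>n y. 0 :: 'c) (Gmap f) (Gmap g) \<and>
         inj_on (Hmap X pt phi f) (Hset X pt phi :: (nat \<Rightarrow> 'x \<Rightarrow> 'a) set set) \<and>
         exact_at (Hset X pt phi :: (nat \<Rightarrow> 'x \<Rightarrow> 'a) set set) (Hset X pt phi)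
            (Kset X pt phi) (Hmap X pt phi f) (Hmap X pt phi g))
    \<and>
    (mittag_leffler X phi \<longrightarrow>
      (\<forall>(f :: 'a \<Rightarrow> 'b) (g :: 'b \<Rightarrow> 'c).
       additive f \<and> additive g \<and> inj f \<and> {b. g b = 0} = range f \<and> surj g \<longrightarrow>
         inj_on (Gmap f) (Gset X pt phi :: (nat \<Rightarrow> 'x \<Rightarrow> 'a) set) \<and>
         exact_at (Gset X pt phi :: (nat \<Rightarrow> 'x \<Rightarrow> 'a) set) (Gset X pt phi) (\<lambda>n y. 0 :: 'c) (Gmap f) (Gmap g) \<and>
         Gmap g ` (Gset X pt phi :: (nat \<Rightarrow> 'x \<Rightarrow> 'b) set) = Gset X pt phi \<and>
         inj_on (Hmap X pt phi f) (Hset X pt phi :: (nat \<Rightarrow> 'x \<Rightarrow> 'a) set set) \<and>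
         exact_at (Hset X pt phi :: (nat \<Rightarrow> 'x \<Rightarrow> 'a) set set) (Hset X pt phi)
            (Kset X pt phi) (Hmap X pt phi f) (Hmap X pt phi g) \<and>
         Hmap X pt phi g ` (Hset X pt phi :: (nat \<Rightarrow> 'x \<Rightarrow> 'b) set set) = Hset X pt phi))"
proof (intro conjI allI impI)
  fix f :: "'a \<Rightarrow> 'b" and g :: "'b \<Rightarrow> 'c"
  assume h: "additive f \<and> additive g \<and> inj f \<and> {b. g b = 0} = range f"
  then have f: "additive f" "inj f" and g: "additive g" and ex: "{b. g b = 0} = range f" by simp_all
  show "inj_on (Gmap f) (Gset X pt phi :: (nat \<Rightarrow> 'x \<Rightarrow> 'a) set)" by (rule G_inj[OF f(2)])
  show "exact_at (Gset X pt phi :: (nat \<Rightarrow> 'x \<Rightarrow> 'a) set) (Gset X pt phi) (\<lambda>n y. 0 :: 'c) (Gmap f) (Gmap g)"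
    by (rule G_exact[OF f g ex])
  show "inj_on (Hmap X pt phi f) (Hset X pt phi :: (nat \<Rightarrow> 'x \<Rightarrow> 'a) set set)"
    by (rule H_inj[OF assms f])
  show "exact_at (Hset X pt phi :: (nat \<Rightarrow> 'x \<Rightarrow> 'a) set set) (Hset X pt phi)
            (Kset X pt phi) (Hmap X pt phi f) (Hmap X pt phi g)"
    by (rule H_exact[OF assms f g ex])
next
  fix f :: "'a \<Rightarrow> 'b" and g :: "'b \<Rightarrow> 'c"
  assume mlc: "mittag_leffler X phi"
  assume h: "additive f \<and> additive g \<and> inj f \<and> {b. g b = 0} = range f \<and> surj g"
  then have f: "additive f" "inj f" and g: "additive g" and ex: "{b. g b = 0} = range f" and sg: "surj g"
    by simp_all
  show "inj_on (Gmap f) (Gset X pt phi :: (nat \<Rightarrow> 'x \<Rightarrow> 'a) set)" by (rule G_inj[OF f(2)])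
  show "exact_at (Gset X pt phi :: (nat \<Rightarrow> 'x \<Rightarrow> 'a) set) (Gset X pt phi) (\<lambda>n y. 0 :: 'c) (Gmap f) (Gmap g)"
    by (rule G_exact[OF f g ex])
  show "Gmap g ` (Gset X pt phi :: (nat \<Rightarrow> 'x \<Rightarrow> 'b) set) = Gset X pt phi"
    by (rule G_surj_eq[OF assms mlc f g ex sg])
  show "inj_on (Hmap X pt phi f) (Hset X pt phi :: (nat \<Rightarrow> 'x \<Rightarrow> 'a) set set)"
    by (rule H_inj[OF assms f])
  show "exact_at (Hset X pt phi :: (nat \<Rightarrow> 'x \<Rightarrow> 'a) set set) (Hset X pt phi)
            (Kset X pt phi) (Hmap X pt phi f) (Hmap X pt phi g)"
    by (rule H_exact[OF assms f g ex])
  show "Hmap X pt phi g ` (Hset X pt phi :: (nat \<Rightarrow> 'x \<Rightarrow> 'b) set set) = Hset X pt phi"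
    by (rule H_surj_eq[OF assms mlc f g ex sg])
qed

end
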